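(* Let $X \in \mathbb{R}^{n\times p}$, let $k$ be a positive integer, let $A \in \mathbb{R}^{p\times k}$ satisfy $A^T A = I_k$, and let $\lambda, \lambda_1 > 0$. Let $B \in \mathbb{R}^{p\times k}$ be a minimizer of the convex function $$B \mapsto \|X - X B A^T\|_F^2 + \lambda \|B\|_F^2 + \lambda_1 \sum_{i=1}^p \|B_{(i)}\|_2 .$$ For $i = 1,\ldots,p$ define $b_i = \sum_{j\neq i} \big(X^{(j)T} X^{(i)}\big) B_{(j)}^T \in \mathbb{R}^{k}$. Then for each $i$, $B_{(i)} = 0$ if and only if $\|A^T X^T X^{(i)} - b_i\|_2 \le \lambda_1/2$.
   Context: For a matrix $M$, $M_{(i)}$ denotes its $i$-th row (as a row vector) and $M^{(i)}$ its $i$-th column. $\|\cdot\|_F$ is the Frobenius norm and $\|\cdot\|_2$ the Euclidean norm; $I_k$ is the $k\times k$ identity matrix. *)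

theory Defs
  imports "HOL-Analysis.Analysis"
begin

definition frob_norm :: "real^'n^'m \<Rightarrow> real" where
  "frob_norm M = sqrt (\<Sum>i\<in>UNIV. \<Sum>j\<in>UNIV. (M $ i $ j)^2)"

definition spca_obj :: "real^'p^'n \<Rightarrow> real^'k^'p \<Rightarrow> real \<Rightarrow> real \<Rightarrow> real^'k^'p \<Rightarrow> real" where
  "spca_obj X A lam lam1 B =
     (frob_norm (X - X ** B ** transpose A))^2 + lam * (frob_norm B)^2
     + lam1 * (\<Sum>i\<in>UNIV. norm (B $ i))"

end

theory Submission
  imports Defs
begin

lemma frob_sq: "(frob_norm (M::real^'n^'m))^2 = (\<Sum>r\<in>UNIV. M$r \<bullet> M$r)"
  unfolding frob_norm_def
  by (subst real_sqrt_pow2) (auto intro!: sum_nonneg simp: inner_vec_def power2_eq_square)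

lemma rowrep_mult:
  fixes X :: "real^'p^'n" and B Bv B0 :: "real^'k^'p"
  assumes hv: "\<And>j. Bv $ j = (if j = i then v else B$j)"
    and h0: "\<And>j. B0 $ j = (if j = i then 0 else B$j)"
  shows "X ** Bv = X ** B0 + (\<chi> r m. X$r$i * v$m)"
proof -
  have h: "(\<Sum>j\<in>UNIV. X$r$j * Bv$j$m) =
     (\<Sum>j\<in>UNIV. X$r$j * B0$j$m) + X$r$i * v$m" for r m
  proof -
    have "(\<Sum>j\<in>UNIV. X$r$j * Bv$j$m) =
      (\<Sum>j\<in>UNIV. X$r$j * B0$j$m + (if j = i then X$r$j * v$m else 0))"
      by (rule sum.cong) (auto simp: hv h0)
    also have "\<dots> = (\<Sum>j\<in>UNIV. X$r$j * B0$j$m) + X$r$i * v$m"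
      by (simp only: sum.distrib) simp
    finally show ?thesis .
  qed
  show ?thesis by (simp add: matrix_matrix_mult_def vec_eq_iff h)
qed

lemma outer_mult:
  fixes x :: "real^'n" and v :: "real^'k" and A :: "real^'k^'p"
  shows "(\<chi> r m. x$r * v$m) ** transpose A = (\<chi> r l. x$r * (A *v v)$l)"
  by (simp add: matrix_matrix_mult_def matrix_vector_mult_def transpose_def vec_eq_iff
      sum_distrib_left mult.commute mult.left_commute)

lemma fro_rank1:
  fixes R :: "real^'l^'n" and x :: "real^'n" and w :: "real^'l"
  shows "(\<Sum>r\<in>UNIV. (R - (\<chi> r l. x$r * w$l))$r \<bullet> (R - (\<chi> r l. x$r * w$l))$r)
     = (\<Sum>r\<in>UNIV. R$r \<bullet> R$r) - 2 * (x \<bullet> (R *v w)) + (x \<bullet> x) * (w \<bullet> w)"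
proof -
  have e: "(\<chi> r l. x$r * w$l) $ r = x$r *\<^sub>R w" for r by (simp add: vec_eq_iff)
  have "\<And>r. (R - (\<chi> r l. x$r * w$l))$r \<bullet> (R - (\<chi> r l. x$r * w$l))$r
     = R$r \<bullet> R$r - 2 * (x$r * (R *v w)$r) + (x$r * x$r) * (w \<bullet> w)"
    unfolding vector_minus_component e
    by (simp add: inner_diff_left inner_diff_right matrix_vector_mul_component inner_commute algebra_simps)
  then show ?thesis
    by (simp add: sum.distrib sum_subtractf inner_vec_def sum_distrib_left sum_distrib_right algebra_simps)
qed

lemma mat_add_rdistrib: "((P::real^'m^'n) + Q) ** C = P ** C + Q ** C"
  by (simp add: matrix_matrix_mult_def vec_eq_iff sum.distrib algebra_simps)

lemma orth_norm:
  fixes A :: "real^'k^'p"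
  assumes orth: "transpose A ** A = mat 1"
  shows "(A *v v) \<bullet> (A *v v) = v \<bullet> v"
proof -
  have "(A *v v) v* A = v"
    by (metis transpose_matrix_vector matrix_vector_mul_assoc orth matrix_vector_mul_lid)
  then show ?thesis by (metis dot_lmul_matrix inner_commute)
qed

lemma vm_B0:
  fixes y :: "real^'p" and B B0 :: "real^'k^'p"
  assumes h0: "\<And>j. B0 $ j = (if j = i then 0 else B$j)"
  shows "y v* B0 = (\<Sum>j\<in>UNIV - {i}. y$j *\<^sub>R B$j)"
proof -
  have "(\<Sum>j\<in>UNIV. y$j * B0$j$m) = (\<Sum>j\<in>UNIV - {i}. y$j * B$j$m)" for m
  proof -
    have "(\<Sum>j\<in>UNIV. y$j * B0$j$m) = (\<Sum>j\<in>UNIV - {i}. y$j * B0$j$m)"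
      by (rule sum.mono_neutral_right) (auto simp: h0)
    also have "\<dots> = (\<Sum>j\<in>UNIV - {i}. y$j * B$j$m)"
      by (rule sum.cong) (auto simp: h0)
    finally show ?thesis .
  qed
  then show ?thesis by (simp add: vector_matrix_mult_def vec_eq_iff)
qed

lemma xX: "(column i X v* (X::real^'p^'n)) $ j = column j X \<bullet> column i X"
  by (simp add: vector_matrix_mult_def column_def inner_vec_def mult.commute)

lemma key:
  fixes X :: "real^'p^'n" and A :: "real^'k^'p" and B B0 :: "real^'k^'p"
  assumes orth: "transpose A ** A = mat 1"
    and h0: "\<And>j. B0 $ j = (if j = i then 0 else B$j)"
  defines "x \<equiv> column i X"
  defines "d \<equiv> transpose A *v (transpose X *v column i X)
          - (\<Sum>j\<in>UNIV - {i}. (column j X \<bullet> column i X) *\<^sub>R (B $ j))"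
  defines "R \<equiv> X - X ** B0 ** transpose A"
  shows "spca_obj X A lam lam1 (\<chi> j. if j = i then v else B$j) =
     (\<Sum>r\<in>UNIV. R$r \<bullet> R$r) + lam * (\<Sum>r\<in>UNIV. B0$r \<bullet> B0$r) + lam1 * (\<Sum>r\<in>UNIV. norm (B0$r))
     + (x \<bullet> x + lam) * (v \<bullet> v) - 2 * (d \<bullet> v) + lam1 * norm v"
proof -
  define Bv where "Bv = (\<chi> j. if j = i then v else B$j)"
  have hv: "\<And>j. Bv $ j = (if j = i then v else B$j)" by (simp add: Bv_def)
  define w where "w = A *v v"
  have M: "X - X ** Bv ** transpose A = R - (\<chi> r l. x$r * w$l)"
    using outer_mult[of "column i X" v A]
    unfolding rowrep_mult[OF hv h0] mat_add_rdistrib R_def w_def x_def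
    by (simp add: column_def)
  have Rw: "R *v w = X *v w - X *v (B0 *v v)"
  proof -
    have "(X ** B0 ** transpose A) *v (A *v v) = X *v (B0 *v v)"
      by (metis matrix_vector_mul_assoc orth matrix_vector_mul_lid)
    then show ?thesis unfolding R_def w_def by (simp add: matrix_vector_mult_diff_rdistrib)
  qed
  have xR: "x \<bullet> (R *v w) = d \<bullet> v"
  proof -
    have "x \<bullet> (R *v w) = x \<bullet> (X *v w) - x \<bullet> (X *v (B0 *v v))"
      unfolding Rw inner_diff_right ..
    also have "\<dots> = x \<bullet> (X *v (A *v v)) - x \<bullet> (X *v (B0 *v v))"
      unfolding w_def ..
    also have "\<dots> = (x v* X) \<bullet> (A *v v) - (x v* X) \<bullet> (B0 *v v)"
      by (simp only: dot_lmul_matrix)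
    also have "\<dots> = ((x v* X) v* A) \<bullet> v - ((x v* X) v* B0) \<bullet> v"
      by (simp only: dot_lmul_matrix)
    also have "(x v* X) v* B0 = (\<Sum>j\<in>UNIV - {i}. (column j X \<bullet> column i X) *\<^sub>R (B $ j))"
      unfolding vm_B0[OF h0] x_def xX ..
    finally show ?thesis unfolding d_def x_def by (simp add: inner_diff_left)
  qed
  have F1: "(frob_norm (X - X ** Bv ** transpose A))^2
      = (\<Sum>r\<in>UNIV. R$r \<bullet> R$r) - 2 * (d \<bullet> v) + (x \<bullet> x) * (v \<bullet> v)"
    unfolding frob_sq M fro_rank1 xR using orth_norm[OF orth, of v] by (simp add: w_def)
  have F2: "(frob_norm Bv)^2 = (\<Sum>r\<in>UNIV. B0$r \<bullet> B0$r) + v \<bullet> v"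
  proof -
    have "(\<Sum>r\<in>UNIV. Bv$r \<bullet> Bv$r) = (\<Sum>r\<in>UNIV. B0$r \<bullet> B0$r + (if r = i then v \<bullet> v else 0))"
      by (rule sum.cong) (auto simp: hv h0)
    then show ?thesis unfolding frob_sq by (simp add: sum.distrib)
  qed
  have F3: "(\<Sum>r\<in>UNIV. norm (Bv$r)) = (\<Sum>r\<in>UNIV. norm (B0$r)) + norm v"
  proof -
    have "(\<Sum>r\<in>UNIV. norm (Bv$r)) = (\<Sum>r\<in>UNIV. norm (B0$r) + (if r = i then norm v else 0))"
      by (rule sum.cong) (auto simp: hv h0)
    then show ?thesis by (simp add: sum.distrib)
  qed
  show ?thesis unfolding Bv_def[symmetric] spca_obj_def F1 F2 F3 by (simp add: algebra_simps)
qed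

theorem claim1:
  fixes X :: "real^'p^'n" and A :: "real^'k^'p" and B :: "real^'k^'p"
    and lam lam1 :: real
  assumes orth: "transpose A ** A = mat 1"
    and lam_pos: "lam > 0" and lam1_pos: "lam1 > 0"
    and minimizer: "\<forall>B'. spca_obj X A lam lam1 B \<le> spca_obj X A lam lam1 B'"
  shows "\<forall>i. (B $ i = 0 \<longleftrightarrow>
    norm (transpose A *v (transpose X *v column i X)
          - (\<Sum>j\<in>UNIV - {i}. (column j X \<bullet> column i X) *\<^sub>R (B $ j))) \<le> lam1 / 2)"
proof
  fix i
  define B0 where "B0 = (\<chi> j. if j = i then 0 else B$j)"
  have h0: "\<And>j. B0 $ j = (if j = i then 0 else B$j)" by (simp add: B0_def)
  define d where "d = transpose A *v (transpose X *v column i X)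
          - (\<Sum>j\<in>UNIV - {i}. (column j X \<bullet> column i X) *\<^sub>R (B $ j))"
  define x where "x = column i X"
  define R where "R = X - X ** B0 ** transpose A"
  define K where "K = (\<Sum>r\<in>UNIV. R$r \<bullet> R$r) + lam * (\<Sum>r\<in>UNIV. B0$r \<bullet> B0$r) + lam1 * (\<Sum>r\<in>UNIV. norm (B0$r))"
  define al where "al = x \<bullet> x + lam"
  have alpos: "al > 0" using lam_pos by (simp add: al_def add_nonneg_pos)
  have g: "spca_obj X A lam lam1 (\<chi> j. if j = i then v else B$j) =
      K + al * (v \<bullet> v) - 2 * (d \<bullet> v) + lam1 * norm v" for v
    unfolding K_def al_def d_def x_def R_def by (rule key[OF orth h0])
  have BB: "(\<chi> j. if j = i then B$i else B$j) = B" by (simp add: vec_eq_iff)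
  have ming: "K + al * (B$i \<bullet> B$i) - 2 * (d \<bullet> B$i) + lam1 * norm (B$i) \<le>
      K + al * (v \<bullet> v) - 2 * (d \<bullet> v) + lam1 * norm v" for v
    using minimizer g[of "B$i"] g[of v] BB by metis
  show "B $ i = 0 \<longleftrightarrow> norm d \<le> lam1 / 2" unfolding d_def[symmetric]
  proof
    assume Bi: "B $ i = 0"
    show "norm d \<le> lam1 / 2"
    proof (rule ccontr)
      assume "\<not> norm d \<le> lam1 / 2"
      then have gt: "2 * norm d - lam1 > 0" by simp
      define nd where "nd = norm d"
      have ndpos: "nd > 0" using gt lam1_pos unfolding nd_def by linarith
      define t where "t = (2 * nd - lam1) / (2 * al * nd)"
      have tpos: "t > 0" unfolding t_def using gt alpos ndpos nd_def by simp
      have at: "al * t * nd = (2 * nd - lam1) / 2" unfolding t_def using alpos ndpos by (simp add: field_simps)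
      have dd: "d \<bullet> d = nd^2" by (simp add: nd_def power2_norm_eq_inner)
      have "0 \<le> al * ((t *\<^sub>R d) \<bullet> (t *\<^sub>R d)) - 2 * (d \<bullet> (t *\<^sub>R d)) + lam1 * norm (t *\<^sub>R d)"
        using ming[of "t *\<^sub>R d"] Bi by simp
      also have "\<dots> = t * nd * (al * t * nd - 2 * nd + lam1)"
        using tpos dd by (simp add: nd_def[symmetric] algebra_simps power2_eq_square)
      also have "\<dots> = t * nd * (- (2 * nd - lam1) / 2)" by (simp add: at) (simp add: field_simps)
      also have "\<dots> < 0" using tpos ndpos gt nd_def
        by (simp add: mult_pos_neg)
      finally show False by simp
    qed
  next
    assume nd: "norm d \<le> lam1 / 2"
    define v where "v = B $ i"
    have le: "al * (v \<bullet> v) - 2 * (d \<bullet> v) + lam1 * norm v \<le> 0"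
      using ming[of 0] by (simp add: v_def)
    have "d \<bullet> v \<le> norm d * norm v" by (rule norm_cauchy_schwarz)
    also have "\<dots> \<le> lam1 / 2 * norm v" using nd by (intro mult_right_mono) auto
    finally have "al * (v \<bullet> v) \<le> 0" using le by simp
    then have "v \<bullet> v \<le> 0" using alpos by (simp add: mult_le_0_iff)
    then show "B $ i = 0" unfolding v_def[symmetric] by (metis inner_eq_zero_iff inner_ge_zero order_antisym)
  qed
qed

end
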